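(* For every integer $n\ge 4$ there exist a boolean classifier $\kappa:\{0,1\}^n\to\{0,1\}$ and a point $\mathbf v\in\{0,1\}^n$ such that, for the sample $(\mathbf v,\kappa(\mathbf v))$, there exist an irrelevant feature $i_1\in\mathcal F$ and a relevant feature $i_2\in\mathcal F\setminus\{i_1\}$ with $\mathrm{Sv}(i_1)\cdot\mathrm{Sv}(i_2)>0$ (issue I6).
   Context: Let $\mathcal F=\{1,\dots,n\}$. A boolean classifier is a non-constant function $\kappa:\{0,1\}^n\to\{0,1\}$; a sample is a pair $(\mathbf v,c)$ with $\mathbf v\in\{0,1\}^n$ and $c=\kappa(\mathbf v)$. For $\mathcal S\subseteq\mathcal F$ let $\Upsilon(\mathcal S;\mathbf v)=\{\mathbf x\in\{0,1\}^n : x_j=v_j \text{ for all } j\in\mathcal S\}$ and, for any function $g$ on $\{0,1\}^n$, $\mathbf E[g\mid \mathbf x_{\mathcal S}=\mathbf v_{\mathcal S}]=|\Upsilon(\mathcal S;\mathbf v)|^{-1}\sum_{\mathbf x\in\Upsilon(\mathcal S;\mathbf v)}g(\mathbf x)$ (uniform distribution, independent features). The characteristic function is $\upsilon(\mathcal S)=\mathbf E[\kappa\mid\mathbf x_{\mathcal S}=\mathbf v_{\mathcal S}]$, and the SHAP score of feature $i$ is $\mathrm{Sv}(i)=\sum_{\mathcal S\subseteq\mathcal F\setminus\{i\}}\frac{|\mathcal S|!\,(n-|\mathcal S|-1)!}{n!}\big(\upsilon(\mathcal S\cup\{i\})-\upsilon(\mathcal S)\big)$. The similarity predicate is $\sigma(\mathbf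 x)=1$ if $\kappa(\mathbf x)=\kappa(\mathbf v)$ and $0$ otherwise. A set $\mathcal S\subseteq\mathcal F$ is a weak abductive explanation (WAXp) if $\mathbf E[\sigma\mid\mathbf x_{\mathcal S}=\mathbf v_{\mathcal S}]=1$ (i.e. $\kappa(\mathbf x)=\kappa(\mathbf v)$ for all $\mathbf x\in\Upsilon(\mathcal S;\mathbf v)$); an abductive explanation (AXp) is a WAXp $\mathcal S$ such that $\mathcal S\setminus\{t\}$ is not a WAXp for every $t\in\mathcal S$. A feature is relevant if it belongs to at least one AXp, and irrelevant otherwise. *)

theory Defs
  imports Complex_Main
begin

text \<open>Points of {0,1}^n are represented as functions nat => bool supported on
  the feature set {1..n} (value False outside), with True = 1, False = 0.
  A classifier is a function on such points with values in bool (True = 1).\<close>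

definition feats :: "nat \<Rightarrow> nat set" where
  "feats n = {1..n}"

definition points :: "nat \<Rightarrow> (nat \<Rightarrow> bool) set" where
  "points n = {x. \<forall>j. j \<notin> feats n \<longrightarrow> \<not> x j}"

definition classifier :: "nat \<Rightarrow> ((nat \<Rightarrow> bool) \<Rightarrow> bool) \<Rightarrow> bool" where
  "classifier n \<kappa> \<longleftrightarrow> (\<exists>x\<in>points n. \<exists>y\<in>points n. \<kappa> x \<noteq> \<kappa> y)"

definition Upsilon :: "nat \<Rightarrow> nat set \<Rightarrow> (nat \<Rightarrow> bool) \<Rightarrow> (nat \<Rightarrow> bool) set" where
  "Upsilon n S v = {x \<in> points n. \<forall>j\<in>S. x j = v j}"

definition cond_exp :: "nat \<Rightarrow> ((nat \<Rightarrow> bool) \<Rightarrow> real) \<Rightarrow> nat set \<Rightarrow> (nat \<Rightarrow> bool) \<Rightarrow> real" where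
  "cond_exp n g S v = (\<Sum>x\<in>Upsilon n S v. g x) / real (card (Upsilon n S v))"

definition charfun :: "nat \<Rightarrow> ((nat \<Rightarrow> bool) \<Rightarrow> bool) \<Rightarrow> (nat \<Rightarrow> bool) \<Rightarrow> nat set \<Rightarrow> real" where
  "charfun n \<kappa> v S = cond_exp n (\<lambda>x. of_bool (\<kappa> x)) S v"

definition SHAP :: "nat \<Rightarrow> ((nat \<Rightarrow> bool) \<Rightarrow> bool) \<Rightarrow> (nat \<Rightarrow> bool) \<Rightarrow> nat \<Rightarrow> real" where
  "SHAP n \<kappa> v i = (\<Sum>S\<in>Pow (feats n - {i}).
      (fact (card S) * fact (n - card S - 1) / fact n) *
      (charfun n \<kappa> v (insert i S) - charfun n \<kappa> v S))"

definition WAXp :: "nat \<Rightarrow> ((nat \<Rightarrow> bool) \<Rightarrow> bool) \<Rightarrow> (nat \<Rightarrow> bool) \<Rightarrow> nat set \<Rightarrow> bool" where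
  "WAXp n \<kappa> v S \<longleftrightarrow> S \<subseteq> feats n \<and>
     cond_exp n (\<lambda>x. of_bool (\<kappa> x = \<kappa> v)) S v = 1"

definition AXp :: "nat \<Rightarrow> ((nat \<Rightarrow> bool) \<Rightarrow> bool) \<Rightarrow> (nat \<Rightarrow> bool) \<Rightarrow> nat set \<Rightarrow> bool" where
  "AXp n \<kappa> v S \<longleftrightarrow> WAXp n \<kappa> v S \<and> (\<forall>t\<in>S. \<not> WAXp n \<kappa> v (S - {t}))"

definition relevant :: "nat \<Rightarrow> ((nat \<Rightarrow> bool) \<Rightarrow> bool) \<Rightarrow> (nat \<Rightarrow> bool) \<Rightarrow> nat \<Rightarrow> bool" where
  "relevant n \<kappa> v i \<longleftrightarrow> (\<exists>S. AXp n \<kappa> v S \<and> i \<in> S)"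

end

theory Submission
  imports Defs
begin

lemma finite_points: "finite (points n)"
proof -
  have "points n \<subseteq> (\<lambda>A j. j \<in> A) ` Pow (feats n)"
  proof
    fix x assume x: "x \<in> points n"
    have "x = (\<lambda>j. j \<in> {j\<in>feats n. x j})"
      using x unfolding points_def by auto
    moreover have "{j\<in>feats n. x j} \<in> Pow (feats n)" by auto
    ultimately show "x \<in> (\<lambda>A j. j \<in> A) ` Pow (feats n)" by blast
  qed
  moreover have "finite (feats n)" by (simp add: feats_def)
  ultimately show ?thesis by (meson finite_Pow_iff finite_imageI finite_subset)
qed

lemma finite_Upsilon: "finite (Upsilon n S v)"
  using finite_points[of n] unfolding Upsilon_def by auto

lemma v_in_Upsilon: "v \<in> points n \<Longrightarrow> v \<in> Upsilon n S v"
  unfolding Upsilon_def by auto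

lemma cond_exp_one_iff:
  assumes "v \<in> points n"
  shows "cond_exp n (\<lambda>x. of_bool (P x)) S v = 1 \<longleftrightarrow> (\<forall>x\<in>Upsilon n S v. P x)"
proof -
  let ?U = "Upsilon n S v"
  have fin: "finite ?U" by (rule finite_Upsilon)
  have ne: "card ?U > 0" using fin v_in_Upsilon[OF assms] card_gt_0_iff by blast
  have s: "(\<Sum>x\<in>?U. of_bool (P x) :: real) = real (card {x\<in>?U. P x})"
    using fin by (simp add: sum.If_cases Int_def)
  have "cond_exp n (\<lambda>x. of_bool (P x)) S v = 1 \<longleftrightarrow> card {x\<in>?U. P x} = card ?U"
    unfolding cond_exp_def s using ne by (auto simp add: divide_eq_1_iff)
  also have "\<dots> \<longleftrightarrow> {x\<in>?U. P x} = ?U"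
    using fin by (metis (no_types, lifting) card_subset_eq mem_Collect_eq subsetI)
  also have "\<dots> \<longleftrightarrow> (\<forall>x\<in>?U. P x)" by blast
  finally show ?thesis .
qed

lemma marg:
  assumes i: "i \<in> feats n" and S: "S \<subseteq> feats n - {i}" and v: "v \<in> points n"
  shows "cond_exp n g (insert i S) v - cond_exp n g S v =
     (\<Sum>x\<in>Upsilon n (insert i S) v. g x - g (x(i := \<not> x i))) / (2 * real (card (Upsilon n (insert i S) v)))"
proof -
  define U where "U = Upsilon n (insert i S) v"
  define fl where "fl = (\<lambda>x::nat\<Rightarrow>bool. x(i := \<not> x i))"
  have fin: "finite U" unfolding U_def by (rule finite_Upsilon)
  have c: "card U > 0" using fin v_in_Upsilon[OF v] card_gt_0_iff unfolding U_def by blast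
  have flfl: "fl (fl x) = x" for x unfolding fl_def by auto
  have inj: "inj_on fl X" for X by (metis flfl inj_on_inverseI)
  have flpts: "fl x \<in> points n" if "x \<in> points n" for x
    using that i unfolding fl_def points_def by auto
  have iS: "i \<notin> S" using S by auto
  have eq: "Upsilon n S v = U \<union> fl ` U"
  proof
    show "Upsilon n S v \<subseteq> U \<union> fl ` U"
    proof
      fix x assume x: "x \<in> Upsilon n S v"
      show "x \<in> U \<union> fl ` U"
      proof (cases "x i = v i")
        case True thus ?thesis using x unfolding U_def Upsilon_def by auto
      next
        case False
        have "fl x \<in> points n" using x flpts unfolding Upsilon_def by auto
        moreover have "fl x i = v i" using False unfolding fl_def by auto
        moreover have "\<forall>j\<in>S. fl x j = v j" using x iS unfolding Upsilon_def fl_def by auto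
        ultimately have "fl x \<in> U" unfolding U_def Upsilon_def by auto
        thus ?thesis using flfl by (metis UnI2 image_eqI)
      qed
    qed
  next
    have flj: "fl x j = x j" if "j \<in> S" for x j using that iS unfolding fl_def by auto
    show "U \<union> fl ` U \<subseteq> Upsilon n S v"
    proof
      fix y assume "y \<in> U \<union> fl ` U"
      then consider "y \<in> U" | x where "x \<in> U" "y = fl x" by blast
      thus "y \<in> Upsilon n S v"
      proof cases
        case 1 thus ?thesis unfolding U_def Upsilon_def by auto
      next
        case 2
        have "y \<in> points n" using 2 flpts unfolding U_def Upsilon_def by auto
        moreover have "\<forall>j\<in>S. y j = v j" using 2 flj unfolding U_def Upsilon_def by auto
        ultimately show ?thesis unfolding Upsilon_def by auto
      qed
    qed
  qed
  have disj: "U \<inter> fl ` U = {}" unfolding U_def Upsilon_def fl_def by auto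
  have cardS: "card (Upsilon n S v) = 2 * card U"
    using eq disj fin card_Un_disjoint card_image[OF inj] by (metis finite_imageI mult_2)
  have sumS: "(\<Sum>x\<in>Upsilon n S v. g x) = (\<Sum>x\<in>U. g x) + (\<Sum>x\<in>U. g (fl x))"
    using eq disj fin by (simp add: sum.union_disjoint sum.reindex[OF inj])
  have "cond_exp n g (insert i S) v - cond_exp n g S v
     = (\<Sum>x\<in>U. g x) / card U - ((\<Sum>x\<in>U. g x) + (\<Sum>x\<in>U. g (fl x))) / (2 * card U)"
    unfolding cond_exp_def U_def[symmetric] cardS sumS by simp
  also have "\<dots> = ((\<Sum>x\<in>U. g x) - (\<Sum>x\<in>U. g (fl x))) / (2 * card U)"
    using c by (simp add: field_simps)
  also have "\<dots> = (\<Sum>x\<in>U. g x - g (fl x)) / (2 * card U)"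
    by (simp add: sum_subtractf)
  finally show ?thesis unfolding U_def fl_def by simp
qed

lemma marg_nonneg:
  assumes i: "i \<in> feats n" and S: "S \<subseteq> feats n - {i}" and v: "v \<in> points n"
    and mono: "\<And>x. x \<in> points n \<Longrightarrow> x i = v i \<Longrightarrow> g (x(i := \<not> x i)) \<le> g x"
  shows "cond_exp n g (insert i S) v - cond_exp n g S v \<ge> 0"
  unfolding marg[OF assms(1-3)]
  by (rule divide_nonneg_nonneg, rule sum_nonneg) (use mono in \<open>auto simp: Upsilon_def\<close>)

lemma marg_pos:
  assumes i: "i \<in> feats n" and S: "S \<subseteq> feats n - {i}" and v: "v \<in> points n"
    and mono: "\<And>x. x \<in> points n \<Longrightarrow> x i = v i \<Longrightarrow> g (x(i := \<not> x i)) \<le> g x"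
    and y: "y \<in> Upsilon n (insert i S) v" and strict: "g (y(i := \<not> y i)) < g y"
  shows "cond_exp n g (insert i S) v - cond_exp n g S v > 0"
proof -
  have fin: "finite (Upsilon n (insert i S) v)" by (rule finite_Upsilon)
  have c: "card (Upsilon n (insert i S) v) > 0" using fin y card_gt_0_iff by blast
  have "(\<Sum>x\<in>Upsilon n (insert i S) v. g x - g (x(i := \<not> x i))) > 0"
    by (rule sum_pos2[OF fin y]) (use strict mono in \<open>auto simp: Upsilon_def\<close>)
  thus ?thesis unfolding marg[OF assms(1-3)] using c by simp
qed

lemma SHAP_pos:
  assumes i: "i \<in> feats n" and v: "v \<in> points n"
    and mono: "\<And>x. x \<in> points n \<Longrightarrow> x i = v i \<Longrightarrow> \<kappa> (x(i := \<not> x i)) \<longrightarrow> \<kappa> x"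
    and y: "y \<in> Upsilon n {i} v" and strict: "\<kappa> y" "\<not> \<kappa> (y(i := \<not> y i))"
  shows "SHAP n \<kappa> v i > 0"
proof -
  have mono': "\<And>x. x \<in> points n \<Longrightarrow> x i = v i \<Longrightarrow> of_bool (\<kappa> (x(i := \<not> x i))) \<le> (of_bool (\<kappa> x) :: real)"
    using mono by fastforce
  have n: "n \<ge> 1" using i by (simp add: feats_def)
  show ?thesis unfolding SHAP_def
  proof (rule sum_pos2[of _ "{}"])
    show "finite (Pow (feats n - {i}))" by (simp add: feats_def)
    show "{} \<in> Pow (feats n - {i})" by simp
    have "charfun n \<kappa> v (insert i {}) - charfun n \<kappa> v {} > 0"
      unfolding charfun_def
      using marg_pos[of i n "{}" v "\<lambda>x. of_bool (\<kappa> x)" y] i v mono' y strict by auto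
    moreover have "fact (card ({}::nat set)) * fact (n - card ({}::nat set) - 1) / fact n > (0::real)"
      by simp
    ultimately show "0 < fact (card ({}::nat set)) * fact (n - card ({}::nat set) - 1) / fact n *
       (charfun n \<kappa> v (insert i {}) - charfun n \<kappa> v {})" by simp
  next
    fix S assume "S \<in> Pow (feats n - {i})"
    hence S: "S \<subseteq> feats n - {i}" by auto
    have "charfun n \<kappa> v (insert i S) - charfun n \<kappa> v S \<ge> 0"
      unfolding charfun_def using marg_nonneg[of i n S v "\<lambda>x. of_bool (\<kappa> x)"] i S v mono' by auto
    thus "0 \<le> fact (card S) * fact (n - card S - 1) / fact n * (charfun n \<kappa> v (insert i S) - charfun n \<kappa> v S)"
      by simp
  qed
qed

definition k0 :: "(nat \<Rightarrow> bool) \<Rightarrow> bool" where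
  "k0 x \<longleftrightarrow> x 4 \<and> (x 2 \<and> x 3 \<or> x 1 \<and> \<not> x 2 \<and> \<not> x 3)"

lemma WAXp_k0:
  assumes n: "n \<ge> 4"
  shows "WAXp n k0 (\<lambda>j. j \<in> feats n) S \<longleftrightarrow> S \<subseteq> feats n \<and> {2,3,4} \<subseteq> S"
proof -
  define v where "v = (\<lambda>j. j \<in> feats n)"
  have v: "v \<in> points n" unfolding v_def points_def by auto
  have kv: "k0 v" using n unfolding v_def k0_def feats_def by auto
  have f: "1 \<in> feats n" "2 \<in> feats n" "3 \<in> feats n" "4 \<in> feats n" using n by (auto simp: feats_def)
  have pts: "v(j := False) \<in> points n" for j using v unfolding points_def by auto
  have "WAXp n k0 v S \<longleftrightarrow> S \<subseteq> feats n \<and> (\<forall>x\<in>Upsilon n S v. k0 x)"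
    unfolding WAXp_def cond_exp_one_iff[OF v] using kv by simp
  also have "\<dots> \<longleftrightarrow> S \<subseteq> feats n \<and> {2,3,4} \<subseteq> S"
  proof (intro conj_cong refl iffI)
    assume S: "S \<subseteq> feats n" and all: "\<forall>x\<in>Upsilon n S v. k0 x"
    have "j \<in> S" if j: "j \<in> {2,3,4::nat}" for j
    proof (rule ccontr)
      assume "j \<notin> S"
      hence "v(j := False) \<in> Upsilon n S v" using pts unfolding Upsilon_def by auto
      hence "k0 (v(j := False))" using all by blast
      thus False using j f unfolding k0_def v_def by auto
    qed
    thus "{2,3,4} \<subseteq> S" by blast
  next
    assume "S \<subseteq> feats n" and "{2,3,4} \<subseteq> S"
    thus "\<forall>x\<in>Upsilon n S v. k0 x" using f unfolding Upsilon_def k0_def v_def by auto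
  qed
  finally show ?thesis unfolding v_def .
qed

theorem proposition5:
  fixes n :: nat
  assumes "n \<ge> 4"
  shows "\<exists>\<kappa> v. classifier n \<kappa> \<and> v \<in> points n \<and>
           (\<exists>i1 \<in> feats n. \<exists>i2 \<in> feats n - {i1}.
              \<not> relevant n \<kappa> v i1 \<and> relevant n \<kappa> v i2 \<and>
              SHAP n \<kappa> v i1 * SHAP n \<kappa> v i2 > 0)"
proof -
  define v where "v = (\<lambda>j. j \<in> feats n)"
  have v: "v \<in> points n" unfolding v_def points_def by auto
  have f: "1 \<in> feats n" "2 \<in> feats n" "3 \<in> feats n" "4 \<in> feats n" using assms by (auto simp: feats_def)
  have kv: "k0 v" using f unfolding v_def k0_def by auto
  have z: "(\<lambda>_. False) \<in> points n" unfolding points_def by auto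
  have "\<not> k0 (\<lambda>_. False)" by (simp add: k0_def)
  hence cl: "classifier n k0" unfolding classifier_def using v z kv by blast
  have W: "\<And>S. WAXp n k0 v S \<longleftrightarrow> S \<subseteq> feats n \<and> {2,3,4} \<subseteq> S"
    unfolding v_def by (rule WAXp_k0[OF assms])
  have nrel: "\<not> relevant n k0 v 1"
  proof
    assume "relevant n k0 v 1"
    then obtain S where "AXp n k0 v S" "1 \<in> S" unfolding relevant_def by blast
    thus False unfolding AXp_def W by auto
  qed
  have rel: "relevant n k0 v 4"
  proof -
    have "AXp n k0 v {2,3,4}" unfolding AXp_def W using f by auto
    thus ?thesis unfolding relevant_def by blast
  qed
  have ptsU: "v(j := False) \<in> points n" for j using v unfolding points_def by auto
  have s1: "SHAP n k0 v 1 > 0"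
  proof (rule SHAP_pos[OF f(1) v, where y="v(2 := False, 3 := False)"])
    show "\<And>x. x \<in> points n \<Longrightarrow> x 1 = v 1 \<Longrightarrow> k0 (x(1 := \<not> x 1)) \<longrightarrow> k0 x"
      using f unfolding k0_def v_def by auto
    show "v(2 := False, 3 := False) \<in> Upsilon n {1} v"
      using v unfolding Upsilon_def points_def by auto
    show "k0 (v(2 := False, 3 := False))" using f unfolding k0_def v_def by auto
    show "\<not> k0 ((v(2 := False, 3 := False))(1 := \<not> (v(2 := False, 3 := False)) 1))"
      using f unfolding k0_def v_def by auto
  qed
  have s4: "SHAP n k0 v 4 > 0"
  proof (rule SHAP_pos[OF f(4) v, where y=v])
    show "\<And>x. x \<in> points n \<Longrightarrow> x 4 = v 4 \<Longrightarrow> k0 (x(4 := \<not> x 4)) \<longrightarrow> k0 x"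
      using f unfolding k0_def v_def by auto
    show "v \<in> Upsilon n {4} v" using v unfolding Upsilon_def by auto
    show "k0 v" by (rule kv)
    show "\<not> k0 (v(4 := \<not> v 4))" using f unfolding k0_def v_def by auto
  qed
  have f4: "4 \<in> feats n - {1}" using f(4) by simp
  have "SHAP n k0 v 1 * SHAP n k0 v 4 > 0" using s1 s4 by simp
  hence "\<exists>i1 \<in> feats n. \<exists>i2 \<in> feats n - {i1}.
              \<not> relevant n k0 v i1 \<and> relevant n k0 v i2 \<and>
              SHAP n k0 v i1 * SHAP n k0 v i2 > 0"
    using f(1) f4 nrel rel by blast
  thus ?thesis using cl v by blast
qed

end
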